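(* For every $\ell\in\mathbb N$ and $s=2^\ell$, the augmented Beneš network satisfies $\gamma(\check B_\ell)\ge s/3$.
   Context: Beneš network $B_\ell$ (inputs $v_1,\dots,v_s$, outputs $w_1,\dots,w_s$, $s=2^\ell$), defined recursively: $B_1=K_{2,2}$ with inputs $v_1,v_2$ on one side and outputs $w_1,w_2$ on the other. For $\ell\ge2$, take two vertex-disjoint copies $B^{\uparrow},B^{\downarrow}$ of $B_{\ell-1}$ with inputs/outputs $v_i^{\uparrow},w_i^{\uparrow}$ and $v_i^{\downarrow},w_i^{\downarrow}$ ($i\in[s/2]$), add new vertices $v_1,\dots,v_s,w_1,\dots,w_s$, and for each $i\in[s/2]$ add all four edges between $\{v_i,v_{i+s/2}\}$ and $\{v_i^{\uparrow},v_i^{\downarrow}\}$ and all four edges between $\{w_i,w_{i+s/2}\}$ and $\{w_i^{\uparrow},w_i^{\downarrow}\}$. The augmented network $\check B_\ell$ is $B_\ell$ plus edges $w_{2i-1}w_{2i}$, $i\in[s/2]$. Blowup: $H\otimes J_t$ has vertices $v^{(i)}$ ($v\in V(H)$, $i\in[t]$) and edges $u^{(i)}v^{(j)}$ for $uv\in E(H)$, all $i,j$, and $u^{(i)}u^{(j)}$ for $i\neq j$. A matching on $X$ is a set of pairwise disjoint pairs of distinct vertices of $X$; $X$ is matching-linked in a graph if for every matching $M$ on $X$ there are pairwise vertex-disjoint paths connecting the endpoints of each pair of $M$. Linkage capacity $\gamma(H)$: the supremum of all $c>0$ such that for all sufficiently large $t$ the blowup $H\otimes J_t$ contains a matching-linked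 set of size $\lfloor ct\rfloor$. *)

theory Defs
  imports Complex_Main "HOL-Library.Extended_Real"
begin

datatype bvert = BIn nat | BOut nat | BUp bvert | BDn bvert

text \<open>Bene\v{s} network B_l (for l >= 1): inputs BIn 1..BIn s, outputs BOut 1..BOut s, s = 2^l;
  the two copies of B_(l-1) are embedded via BUp and BDn.\<close>

fun benes_V :: "nat \<Rightarrow> bvert set" where
  "benes_V 0 = {}"
| "benes_V (Suc 0) = {BIn 1, BIn 2, BOut 1, BOut 2}"
| "benes_V (Suc (Suc n)) =
     BIn ` {1..2^(Suc (Suc n))} \<union> BOut ` {1..2^(Suc (Suc n))}
     \<union> BUp ` benes_V (Suc n) \<union> BDn ` benes_V (Suc n)"

fun benes_E :: "nat \<Rightarrow> bvert set set" where
  "benes_E 0 = {}"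
| "benes_E (Suc 0) = {{BIn i, BOut j} | i j. i \<in> {1,2} \<and> j \<in> {1,2}}"
| "benes_E (Suc (Suc n)) =
     (\<lambda>e. BUp ` e) ` benes_E (Suc n) \<union> (\<lambda>e. BDn ` e) ` benes_E (Suc n)
     \<union> {{BIn a, c (BIn i)} | a i c. i \<in> {1..2^(Suc n)} \<and> a \<in> {i, i + 2^(Suc n)} \<and> c \<in> {BUp, BDn}}
     \<union> {{BOut a, c (BOut i)} | a i c. i \<in> {1..2^(Suc n)} \<and> a \<in> {i, i + 2^(Suc n)} \<and> c \<in> {BUp, BDn}}"

definition aug_benes_V :: "nat \<Rightarrow> bvert set" where
  "aug_benes_V l = benes_V l"

definition aug_benes_E :: "nat \<Rightarrow> bvert set set" where
  "aug_benes_E l = benes_E l \<union> {{BOut (2*i - 1), BOut (2*i)} | i. i \<in> {1..2^l div 2}}"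

definition blowup_V :: "'a set \<Rightarrow> nat \<Rightarrow> ('a \<times> nat) set" where
  "blowup_V V t = V \<times> {1..t}"

definition blowup_E :: "'a set set \<Rightarrow> 'a set \<Rightarrow> nat \<Rightarrow> ('a \<times> nat) set set" where
  "blowup_E E V t =
     {{(u, i), (v, j)} | u v i j. {u, v} \<in> E \<and> i \<in> {1..t} \<and> j \<in> {1..t}}
     \<union> {{(u, i), (u, j)} | u i j. u \<in> V \<and> i \<in> {1..t} \<and> j \<in> {1..t} \<and> i \<noteq> j}"

definition is_path :: "'a set \<Rightarrow> 'a set set \<Rightarrow> 'a list \<Rightarrow> 'a \<Rightarrow> 'a \<Rightarrow> bool" where
  "is_path V E p a b \<longleftrightarrow> p \<noteq> [] \<and> hd p = a \<and> last p = b \<and> distinct p \<and> set p \<subseteq> V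
     \<and> (\<forall>k. Suc k < length p \<longrightarrow> {p ! k, p ! Suc k} \<in> E)"

definition matching_on :: "'a set set \<Rightarrow> 'a set \<Rightarrow> bool" where
  "matching_on M X \<longleftrightarrow> (\<forall>e\<in>M. \<exists>a b. e = {a, b} \<and> a \<noteq> b \<and> a \<in> X \<and> b \<in> X)
     \<and> (\<forall>e\<in>M. \<forall>e'\<in>M. e \<noteq> e' \<longrightarrow> e \<inter> e' = {})"

definition matching_linked :: "'a set \<Rightarrow> 'a set set \<Rightarrow> 'a set \<Rightarrow> bool" where
  "matching_linked V E X \<longleftrightarrow>
     (\<forall>M. matching_on M X \<longrightarrow>
        (\<exists>P :: 'a set \<Rightarrow> 'a list.
           (\<forall>e\<in>M. \<exists>a b. e = {a, b} \<and> is_path V E (P e) a b)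
         \<and> (\<forall>e\<in>M. \<forall>e'\<in>M. e \<noteq> e' \<longrightarrow> set (P e) \<inter> set (P e') = {})))"

definition linkage_capacity :: "'a set \<Rightarrow> 'a set set \<Rightarrow> ereal" where
  "linkage_capacity V E =
     (SUP c \<in> {c :: real. c > 0 \<and>
        (\<exists>T. \<forall>t \<ge> T. \<exists>X. X \<subseteq> blowup_V V t \<and> card X = nat \<lfloor>c * real t\<rfloor>
                        \<and> matching_linked (blowup_V V t) (blowup_E E V t) X)}. ereal c)"

end

theory Submission
  imports Defs
begin


definition dlt :: "('p \<Rightarrow> 'v) \<Rightarrow> ('p \<Rightarrow> 'v) \<Rightarrow> 'p \<Rightarrow> 'v \<Rightarrow> int" where
  "dlt f g p v = (if f p = v then 1 else 0) - (if g p = v then 1 else 0)"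

lemma sum2:
  assumes "finite P" "p1 \<in> P" "p2 \<in> P" "p1 \<noteq> p2"
  shows "sum h P = h p1 + h p2 + sum h (P - {p1,p2})" "sum h (P - {p2}) = h p1 + sum h (P - {p1,p2})"
proof -
  have a: "sum h P = h p1 + sum h (P-{p1})" using assms sum.remove[of P p1] by simp
  have b: "sum h (P-{p1}) = h p2 + sum h (P-{p1}-{p2})" using assms sum.remove[of "P-{p1}" p2] by auto
  have c: "sum h (P-{p2}) = h p1 + sum h (P-{p2}-{p1})" using assms sum.remove[of "P-{p2}" p1] by auto
  have d: "P-{p1}-{p2} = P-{p1,p2}" "P-{p2}-{p1} = P-{p1,p2}" by auto
  show "sum h P = h p1 + h p2 + sum h (P - {p1,p2})" using a b d by (simp add: add.assoc)
  show "sum h (P - {p2}) = h p1 + sum h (P - {p1,p2})" using c d by simp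
qed

lemma orient_sum:
  fixes P :: "'p set" and f g :: "'p \<Rightarrow> 'v"
  assumes "finite P"
  shows "\<exists>or. \<forall>v. \<bar>\<Sum>p\<in>P. dlt (\<lambda>p. if or p then f p else g p) (\<lambda>p. if or p then g p else f p) p v\<bar> \<le> 1"
  using assms
proof (induction "card P" arbitrary: P f g rule: less_induct)
  case less
  show ?case
  proof (cases "\<exists>p\<in>P. f p = g p")
    case True
    then obtain p where p: "p \<in> P" "f p = g p" by blast
    have "card (P - {p}) < card P" using card_Diff1_less[OF less.prems p(1)] .
    have "finite (P-{p})" using less.prems by (rule finite_Diff)
    from less.hyps[OF \<open>card (P - {p}) < card P\<close> this, of f g] obtain or where
      oo: "\<forall>v. \<bar>\<Sum>p\<in>P-{p}. dlt (\<lambda>p. if or p then f p else g p) (\<lambda>p. if or p then g p else f p) p v\<bar> \<le> 1"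
      by blast
    show ?thesis
    proof (rule exI[of _ or], intro allI)
      fix v
      have "(\<Sum>q\<in>P. dlt (\<lambda>p. if or p then f p else g p) (\<lambda>p. if or p then g p else f p) q v)
        = dlt (\<lambda>p. if or p then f p else g p) (\<lambda>p. if or p then g p else f p) p v +
          (\<Sum>q\<in>P-{p}. dlt (\<lambda>p. if or p then f p else g p) (\<lambda>p. if or p then g p else f p) q v)"
        using p less.prems using sum.remove[of P p] by simp
      also have "dlt (\<lambda>p. if or p then f p else g p) (\<lambda>p. if or p then g p else f p) p v = 0"
        using p by (simp add: dlt_def)
      finally show "\<bar>\<Sum>q\<in>P. dlt (\<lambda>p. if or p then f p else g p) (\<lambda>p. if or p then g p else f p) q v\<bar> \<le> 1"
        using oo by simp
    qed
  next
    case noloop: False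
    show ?thesis
    proof (cases "\<exists>v p1 p2. p1 \<in> P \<and> p2 \<in> P \<and> p1 \<noteq> p2 \<and> (f p1 = v \<or> g p1 = v) \<and> (f p2 = v \<or> g p2 = v)")
      case True
      then obtain v p1 p2 where pp: "p1 \<in> P" "p2 \<in> P" "p1 \<noteq> p2" "f p1 = v \<or> g p1 = v" "f p2 = v \<or> g p2 = v"
        by blast
      define u where "u = (if f p1 = v then g p1 else f p1)"
      define w where "w = (if f p2 = v then g p2 else f p2)"
      have uv: "u \<noteq> v" "w \<noteq> v" using noloop pp unfolding u_def w_def by auto
      define f' where "f' = f(p1 := u)"
      define g' where "g' = g(p1 := w)"
      have "card (P - {p2}) < card P" using card_Diff1_less[OF less.prems pp(2)] .
      have "finite (P-{p2})" using less.prems by (rule finite_Diff)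
      from less.hyps[OF \<open>card (P - {p2}) < card P\<close> this, of f' g'] obtain or' where
        or': "\<forall>x. \<bar>\<Sum>p\<in>P-{p2}. dlt (\<lambda>p. if or' p then f' p else g' p) (\<lambda>p. if or' p then g' p else f' p) p x\<bar> \<le> 1"
        by blast
      define or where "or = (\<lambda>p. if p = p1 then (if or' p1 then f p1 = u else f p1 = v)
                               else if p = p2 then (if or' p1 then f p2 = v else f p2 = w) else or' p)"
      let ?S = "\<lambda>p. if or p then f p else g p"
      let ?T = "\<lambda>p. if or p then g p else f p"
      let ?S' = "\<lambda>p. if or' p then f' p else g' p"
      let ?T' = "\<lambda>p. if or' p then g' p else f' p"
      show ?thesis
      proof (rule exI[of _ or], intro allI)
        fix x
        have e1: "(\<Sum>q\<in>P. dlt ?S ?T q x) = dlt ?S ?T p1 x + dlt ?S ?T p2 x + (\<Sum>q\<in>P-{p1,p2}. dlt ?S ?T q x)"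
          by (rule sum2(1)[OF less.prems pp(1-3), of "\<lambda>q. dlt ?S ?T q x"])
        have e2: "(\<Sum>q\<in>P-{p2}. dlt ?S' ?T' q x) = dlt ?S' ?T' p1 x + (\<Sum>q\<in>P-{p1,p2}. dlt ?S' ?T' q x)"
          by (rule sum2(2)[OF less.prems pp(1-3), of "\<lambda>q. dlt ?S' ?T' q x"])
        have e3: "(\<Sum>q\<in>P-{p1,p2}. dlt ?S ?T q x) = (\<Sum>q\<in>P-{p1,p2}. dlt ?S' ?T' q x)"
          by (rule sum.cong) (auto simp: dlt_def or_def f'_def g'_def)
        have e4: "dlt ?S ?T p1 x + dlt ?S ?T p2 x = dlt ?S' ?T' p1 x"
        proof (cases "or' p1")
          case True
          then show ?thesis using pp uv noloop unfolding dlt_def or_def f'_def g'_def u_def w_def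
            by (auto split: if_splits)
        next
          case False
          then show ?thesis using pp uv noloop unfolding dlt_def or_def f'_def g'_def u_def w_def
            by (auto split: if_splits)
        qed
        show "\<bar>\<Sum>q\<in>P. dlt ?S ?T q x\<bar> \<le> 1"
        proof -
          have h: "\<bar>\<Sum>q\<in>P-{p2}. dlt ?S' ?T' q x\<bar> \<le> 1" using or' by blast
          show ?thesis using h by (simp only: e1 e4 e3 e2)
        qed
      qed
    next
      case nonshare: False
      show ?thesis
      proof (rule exI[of _ "\<lambda>_. True"], intro allI)
        fix x
        show "\<bar>\<Sum>q\<in>P. dlt (\<lambda>p. if True then f p else g p) (\<lambda>p. if True then g p else f p) q x\<bar> \<le> 1"
        proof (cases "\<exists>q\<in>P. f q = x \<or> g q = x")
          case True
          then obtain q where q: "q \<in> P" "f q = x \<or> g q = x" by blast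
          have z: "\<forall>r\<in>P-{q}. dlt f g r x = 0"
          proof
            fix r assume r: "r \<in> P - {q}"
            have "\<not> (f r = x \<or> g r = x)" using nonshare q r by blast
            then show "dlt f g r x = 0" by (simp add: dlt_def)
          qed
          have "(\<Sum>r\<in>P. dlt f g r x) = dlt f g q x + (\<Sum>r\<in>P-{q}. dlt f g r x)"
            using q less.prems using sum.remove[of P q] by simp
          also have "(\<Sum>r\<in>P-{q}. dlt f g r x) = 0" using z by simp
          finally show ?thesis by (simp add: dlt_def)
        next
          case False
          hence "\<forall>r\<in>P. dlt f g r x = 0" by (auto simp: dlt_def)
          thus ?thesis by simp
        qed
      qed
    qed
  qed
qed




lemma sum_ind_card: "finite P \<Longrightarrow> (\<Sum>p\<in>P. (if Q p then 1 else 0::int)) = int (card {p\<in>P. Q p})"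
  by (simp add: sum.If_cases Int_def conj_commute)

lemma sum_ind_card_nat: "finite P \<Longrightarrow> (\<Sum>p\<in>P. (if Q p then 1 else 0::nat)) = card {p\<in>P. Q p}"
  by (simp add: sum.If_cases Int_def conj_commute)

lemma orient_card:
  fixes P :: "'p set" and f g :: "'p \<Rightarrow> 'v"
  assumes "finite P"
  shows "\<exists>or. \<forall>v. card {p\<in>P. (if or p then f p else g p) = v} \<le> card {p\<in>P. (if or p then g p else f p) = v} + 1
     \<and> card {p\<in>P. (if or p then g p else f p) = v} \<le> card {p\<in>P. (if or p then f p else g p) = v} + 1"
proof -
  obtain or where or: "\<forall>v. \<bar>\<Sum>p\<in>P. dlt (\<lambda>p. if or p then f p else g p) (\<lambda>p. if or p then g p else f p) p v\<bar> \<le> 1"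
    using orient_sum[OF assms] by blast
  show ?thesis
  proof (rule exI[of _ or], intro allI)
    fix v
    let ?S = "\<lambda>p. if or p then f p else g p"
    let ?T = "\<lambda>p. if or p then g p else f p"
    have "(\<Sum>p\<in>P. dlt ?S ?T p v) = (\<Sum>p\<in>P. (if ?S p = v then 1 else 0::int)) - (\<Sum>p\<in>P. (if ?T p = v then 1 else 0::int))"
      unfolding dlt_def by (simp add: sum_subtractf)
    also have "\<dots> = int (card {p\<in>P. ?S p = v}) - int (card {p\<in>P. ?T p = v})"
      using assms by (simp only: sum_ind_card)
    finally have "\<bar>int (card {p\<in>P. ?S p = v}) - int (card {p\<in>P. ?T p = v})\<bar> \<le> 1" using or by metis
    then show "card {p\<in>P. ?S p = v} \<le> card {p\<in>P. ?T p = v} + 1 \<and> card {p\<in>P. ?T p = v} \<le> card {p\<in>P. ?S p = v} + 1"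
      by linarith
  qed
qed

fun isOut :: "bvert \<Rightarrow> bool" where
  "isOut (BOut _) = True" | "isOut _ = False"

definition cls :: "nat \<Rightarrow> nat \<Rightarrow> nat" where
  "cls h a = (if a \<le> h then a else a - h)"

lemma cls_range: "a \<in> {1..2*h} \<Longrightarrow> cls h a \<in> {1..h}"
  by (auto simp: cls_def)

lemma cls_mem: "a \<in> {1..2*h} \<Longrightarrow> a \<in> {cls h a, cls h a + h}"
  by (auto simp: cls_def)

lemma embed:
  assumes c: "c = BUp \<or> c = BDn"
    and a: "a \<in> {1..2^Suc (Suc n)}" and k: "k \<in> {1..2^Suc (Suc n)}"
    and s: "successively (\<lambda>x y. {x,y} \<in> benes_E (Suc n)) Wi"
    and V: "set Wi \<subseteq> benes_V (Suc n)"
    and ne: "Wi \<noteq> []" and hd: "hd Wi = BOut (cls (2^Suc n) a)" and lst: "last Wi = BIn (cls (2^Suc n) k)"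
  shows "successively (\<lambda>x y. {x,y} \<in> benes_E (Suc (Suc n))) (BOut a # map c Wi @ [BIn k])"
    "set (BOut a # map c Wi @ [BIn k]) \<subseteq> benes_V (Suc (Suc n))"
    "\<forall>x\<in>set (tl (BOut a # map c Wi @ [BIn k])). \<not> isOut x"
proof -
  let ?h = "2^Suc n :: nat"
  have a2: "a \<in> {1..2*?h}" and k2: "k \<in> {1..2*?h}" using a k by auto
  have s1: "successively (\<lambda>x y. {x,y} \<in> benes_E (Suc (Suc n))) (map c Wi)"
    unfolding successively_map
  proof (rule successively_mono[OF s])
    fix x y assume xy: "{x,y} \<in> benes_E (Suc n)"
    have "{c x, c y} \<in> (\<lambda>e. c ` e) ` benes_E (Suc n)"
      by (rule image_eqI[where x="{x,y}"]) (use xy in auto)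
    with c have "{c x, c y} \<in> (\<lambda>e. BUp ` e) ` benes_E (Suc n) \<or> {c x, c y} \<in> (\<lambda>e. BDn ` e) ` benes_E (Suc n)"
      by blast
    then show "{c x, c y} \<in> benes_E (Suc (Suc n))" by (simp only: benes_E.simps Un_iff) blast
  qed
  have e1: "{BOut a, c (BOut (cls ?h a))} \<in> benes_E (Suc (Suc n))"
  proof -
    have "{BOut a, c (BOut (cls ?h a))} \<in> {{BOut a', c' (BOut i)} | a' i c'. i \<in> {1..?h} \<and> a' \<in> {i, i + ?h} \<and> c' \<in> {BUp, BDn}}"
      using cls_range[OF a2] cls_mem[OF a2] c by blast
    then show ?thesis by (simp only: benes_E.simps Un_iff) blast
  qed
  have e2: "{c (BIn (cls ?h k)), BIn k} \<in> benes_E (Suc (Suc n))"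
  proof -
    have "{BIn k, c (BIn (cls ?h k))} \<in> {{BIn a', c' (BIn i)} | a' i c'. i \<in> {1..?h} \<and> a' \<in> {i, i + ?h} \<and> c' \<in> {BUp, BDn}}"
      using cls_range[OF k2] cls_mem[OF k2] c by blast
    then have "{BIn k, c (BIn (cls ?h k))} \<in> benes_E (Suc (Suc n))" by (simp only: benes_E.simps Un_iff) blast
    then show ?thesis by (simp add: insert_commute)
  qed
  show "successively (\<lambda>x y. {x,y} \<in> benes_E (Suc (Suc n))) (BOut a # map c Wi @ [BIn k])"
    using s1 e1 e2 ne hd lst by (simp add: successively_append_iff successively_Cons hd_map last_map)
  show "set (BOut a # map c Wi @ [BIn k]) \<subseteq> benes_V (Suc (Suc n))"
    using V a k c by auto
  show "\<forall>x\<in>set (tl (BOut a # map c Wi @ [BIn k])). \<not> isOut x"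
    using c by auto
qed

lemma bal_le: "(A::nat) \<le> B + 1 \<Longrightarrow> B \<le> A + 1 \<Longrightarrow> A + B \<le> 2*D \<Longrightarrow> A \<le> D \<and> B \<le> D"
  by arith

lemma split_deg:
  assumes "finite P" "\<forall>a. card {p\<in>P. x p = a} \<le> D"
  shows "card {p\<in>P. Q p \<and> cls h (x p) = i} + card {p\<in>P. \<not> Q p \<and> cls h (x p) = i} \<le> 2*D"
proof -
  have "card {p\<in>P. Q p \<and> cls h (x p) = i} + card {p\<in>P. \<not> Q p \<and> cls h (x p) = i}
      = card ({p\<in>P. Q p \<and> cls h (x p) = i} \<union> {p\<in>P. \<not> Q p \<and> cls h (x p) = i})"
    by (rule card_Un_disjoint[symmetric]) (use assms(1) in auto)
  also have "\<dots> \<le> card ({p\<in>P. x p = i} \<union> {p\<in>P. x p = i + h})"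
    by (rule card_mono) (use assms(1) in \<open>auto simp: cls_def split: if_splits\<close>)
  also have "\<dots> \<le> card {p\<in>P. x p = i} + card {p\<in>P. x p = i + h}" by (rule card_Un_le)
  also have "\<dots> \<le> 2*D" using assms(2)[rule_format, of i] assms(2)[rule_format, of "i+h"] by simp
  finally show ?thesis .
qed

lemma count_map_up: "count_list (map BUp xs) (BUp u) = count_list xs u"
  by (induction xs) auto
lemma count_map_dn: "count_list (map BDn xs) (BDn u) = count_list xs u"
  by (induction xs) auto
lemma count_map_up0: "\<not> (\<exists>v. u = BUp v) \<Longrightarrow> count_list (map BUp xs) u = 0"
  by (induction xs) auto
lemma count_map_dn0: "\<not> (\<exists>v. u = BDn v) \<Longrightarrow> count_list (map BDn xs) u = 0"
  by (induction xs) auto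

lemma route:
  fixes P :: "'p set" and oa ia :: "'p \<Rightarrow> nat" and D :: nat
  assumes "finite P" "\<forall>p\<in>P. oa p \<in> {1..2^Suc n} \<and> ia p \<in> {1..2^Suc n}"
    "\<forall>a. card {p\<in>P. oa p = a} \<le> D" "\<forall>k. card {p\<in>P. ia p = k} \<le> D"
  shows "\<exists>W. (\<forall>p\<in>P. successively (\<lambda>x y. {x,y} \<in> benes_E (Suc n)) (W p) \<and> set (W p) \<subseteq> benes_V (Suc n)
      \<and> W p \<noteq> [] \<and> hd (W p) = BOut (oa p) \<and> last (W p) = BIn (ia p) \<and> (\<forall>x\<in>set (tl (W p)). \<not> isOut x))
      \<and> (\<forall>u. (\<Sum>p\<in>P. count_list (W p) u) \<le> D)"
  using assms
proof (induction n arbitrary: P oa ia)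
  case 0
  let ?W = "\<lambda>p. [BOut (oa p), BIn (ia p)]"
  show ?case
  proof (rule exI[of _ ?W], intro conjI ballI allI)
    fix p assume p: "p \<in> P"
    have r: "oa p \<in> {1,2}" "ia p \<in> {1,2}" using 0 p by auto
    have "{BIn (ia p), BOut (oa p)} \<in> benes_E (Suc 0)" using r by auto
    then show "successively (\<lambda>x y. {x,y} \<in> benes_E (Suc 0)) (?W p)" by (simp add: insert_commute)
    show "set (?W p) \<subseteq> benes_V (Suc 0)" using r by auto
  next
    fix u
    have "(\<Sum>p\<in>P. count_list (?W p) u) = (\<Sum>p\<in>P. (if BOut (oa p) = u then 1 else 0) + (if BIn (ia p) = u then 1 else 0))"
      by (rule sum.cong) auto
    also have "\<dots> = card {p\<in>P. BOut (oa p) = u} + card {p\<in>P. BIn (ia p) = u}"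
      using 0(1) by (simp add: sum.distrib sum_ind_card_nat)
    also have "\<dots> \<le> D"
      using 0(3,4) by (cases u) auto
    finally show "(\<Sum>p\<in>P. count_list (?W p) u) \<le> D" .
  qed auto
next
  case (Suc n)
  let ?h = "2^Suc n :: nat"
  have rng: "\<forall>p\<in>P. oa p \<in> {1..2*?h} \<and> ia p \<in> {1..2*?h}" using Suc.prems(2) by simp
  obtain or where or: "\<forall>v. card {p\<in>P. (if or p then Inl (cls ?h (oa p)) else Inr (cls ?h (ia p))) = v}
        \<le> card {p\<in>P. (if or p then Inr (cls ?h (ia p)) else Inl (cls ?h (oa p))) = v} + 1
     \<and> card {p\<in>P. (if or p then Inr (cls ?h (ia p)) else Inl (cls ?h (oa p))) = v}
        \<le> card {p\<in>P. (if or p then Inl (cls ?h (oa p)) else Inr (cls ?h (ia p))) = v} + 1"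
    using orient_card[OF Suc.prems(1), of "\<lambda>p. Inl (cls ?h (oa p)) :: nat + nat" "\<lambda>p. Inr (cls ?h (ia p))"]
    by blast
  have degO: "card {p\<in>P. or p \<and> cls ?h (oa p) = i} \<le> D \<and> card {p\<in>P. \<not> or p \<and> cls ?h (oa p) = i} \<le> D" for i
  proof -
    have e1: "{p\<in>P. (if or p then Inl (cls ?h (oa p)) else Inr (cls ?h (ia p))) = Inl i} = {p\<in>P. or p \<and> cls ?h (oa p) = i}"
      by auto
    have e2: "{p\<in>P. (if or p then Inr (cls ?h (ia p)) else Inl (cls ?h (oa p))) = Inl i} = {p\<in>P. \<not> or p \<and> cls ?h (oa p) = i}"
      by auto
    show ?thesis
      using bal_le[OF _ _ split_deg[OF Suc.prems(1) Suc.prems(3), of or ?h i]] or[rule_format, of "Inl i"]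
      unfolding e1 e2 by blast
  qed
  have degI: "card {p\<in>P. or p \<and> cls ?h (ia p) = i} \<le> D \<and> card {p\<in>P. \<not> or p \<and> cls ?h (ia p) = i} \<le> D" for i
  proof -
    have e1: "{p\<in>P. (if or p then Inl (cls ?h (oa p)) else Inr (cls ?h (ia p))) = Inr i} = {p\<in>P. \<not> or p \<and> cls ?h (ia p) = i}"
      by auto
    have e2: "{p\<in>P. (if or p then Inr (cls ?h (ia p)) else Inl (cls ?h (oa p))) = Inr i} = {p\<in>P. or p \<and> cls ?h (ia p) = i}"
      by auto
    show ?thesis
      using bal_le[OF _ _ split_deg[OF Suc.prems(1) Suc.prems(4), of or ?h i]] or[rule_format, of "Inr i"]
      unfolding e1 e2 by (simp add: add.commute)
  qed
  define P1 where "P1 = {p\<in>P. or p}"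
  define P2 where "P2 = {p\<in>P. \<not> or p}"
  have f1: "finite P1" "finite P2" using Suc.prems(1) by (auto simp: P1_def P2_def)
  have r1: "\<forall>p\<in>P1. cls ?h (oa p) \<in> {1..2^Suc n} \<and> cls ?h (ia p) \<in> {1..2^Suc n}"
    "\<forall>p\<in>P2. cls ?h (oa p) \<in> {1..2^Suc n} \<and> cls ?h (ia p) \<in> {1..2^Suc n}"
    using rng cls_range by (auto simp: P1_def P2_def)
  have d1: "\<forall>a. card {p\<in>P1. cls ?h (oa p) = a} \<le> D" "\<forall>k. card {p\<in>P1. cls ?h (ia p) = k} \<le> D"
  proof -
    have "\<And>a. {p\<in>P1. cls ?h (oa p) = a} = {p\<in>P. or p \<and> cls ?h (oa p) = a}"
         "\<And>k. {p\<in>P1. cls ?h (ia p) = k} = {p\<in>P. or p \<and> cls ?h (ia p) = k}" by (auto simp: P1_def)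
    then show "\<forall>a. card {p\<in>P1. cls ?h (oa p) = a} \<le> D" "\<forall>k. card {p\<in>P1. cls ?h (ia p) = k} \<le> D"
      using degO degI by simp_all
  qed
  have d2: "\<forall>a. card {p\<in>P2. cls ?h (oa p) = a} \<le> D" "\<forall>k. card {p\<in>P2. cls ?h (ia p) = k} \<le> D"
  proof -
    have "\<And>a. {p\<in>P2. cls ?h (oa p) = a} = {p\<in>P. \<not> or p \<and> cls ?h (oa p) = a}"
         "\<And>k. {p\<in>P2. cls ?h (ia p) = k} = {p\<in>P. \<not> or p \<and> cls ?h (ia p) = k}" by (auto simp: P2_def)
    then show "\<forall>a. card {p\<in>P2. cls ?h (oa p) = a} \<le> D" "\<forall>k. card {p\<in>P2. cls ?h (ia p) = k} \<le> D"
      using degO degI by simp_all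
  qed
  obtain W1 where W1: "\<forall>p\<in>P1. successively (\<lambda>x y. {x,y} \<in> benes_E (Suc n)) (W1 p) \<and> set (W1 p) \<subseteq> benes_V (Suc n)
      \<and> W1 p \<noteq> [] \<and> hd (W1 p) = BOut (cls ?h (oa p)) \<and> last (W1 p) = BIn (cls ?h (ia p)) \<and> (\<forall>x\<in>set (tl (W1 p)). \<not> isOut x)"
      "\<forall>u. (\<Sum>p\<in>P1. count_list (W1 p) u) \<le> D"
    using Suc.IH[OF f1(1) r1(1) d1] by blast
  obtain W2 where W2: "\<forall>p\<in>P2. successively (\<lambda>x y. {x,y} \<in> benes_E (Suc n)) (W2 p) \<and> set (W2 p) \<subseteq> benes_V (Suc n)
      \<and> W2 p \<noteq> [] \<and> hd (W2 p) = BOut (cls ?h (oa p)) \<and> last (W2 p) = BIn (cls ?h (ia p)) \<and> (\<forall>x\<in>set (tl (W2 p)). \<not> isOut x)"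
      "\<forall>u. (\<Sum>p\<in>P2. count_list (W2 p) u) \<le> D"
    using Suc.IH[OF f1(2) r1(2) d2] by blast
  define W where "W p = BOut (oa p) # map (if or p then BUp else BDn) (if or p then W1 p else W2 p) @ [BIn (ia p)]" for p
  show ?case
  proof (rule exI[of _ W], intro conjI ballI allI)
    fix p assume p: "p \<in> P"
    have c: "(if or p then BUp else BDn) = BUp \<or> (if or p then BUp else BDn) = BDn" by simp
    have Wi: "successively (\<lambda>x y. {x,y} \<in> benes_E (Suc n)) (if or p then W1 p else W2 p) \<and> set (if or p then W1 p else W2 p) \<subseteq> benes_V (Suc n)
      \<and> (if or p then W1 p else W2 p) \<noteq> [] \<and> hd (if or p then W1 p else W2 p) = BOut (cls ?h (oa p)) \<and> last (if or p then W1 p else W2 p) = BIn (cls ?h (ia p))"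
      using W1(1) W2(1) p by (auto simp: P1_def P2_def)
    have ak: "oa p \<in> {1..2^Suc (Suc n)}" "ia p \<in> {1..2^Suc (Suc n)}" using Suc.prems(2) p by auto
    note E = embed[OF c ak, of "if or p then W1 p else W2 p"] 
    show "successively (\<lambda>x y. {x,y} \<in> benes_E (Suc (Suc n))) (W p)"
      using E(1) Wi unfolding W_def by blast
    show "set (W p) \<subseteq> benes_V (Suc (Suc n))"
      using E(2) Wi unfolding W_def by blast
    show "\<not> isOut x" if "x \<in> set (tl (W p))" for x
      using E(3) Wi that unfolding W_def by blast
    show "W p \<noteq> []" "hd (W p) = BOut (oa p)" "last (W p) = BIn (ia p)" unfolding W_def by auto
  next
    fix u
    show "(\<Sum>p\<in>P. count_list (W p) u) \<le> D"
    proof (cases u)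
      case (BIn k)
      have "(\<Sum>p\<in>P. count_list (W p) u) = (\<Sum>p\<in>P. (if ia p = k then 1 else 0))"
        by (rule sum.cong) (auto simp: W_def BIn count_map_up0 count_map_dn0)
      also have "\<dots> = card {p\<in>P. ia p = k}" using Suc.prems(1) by (simp add: sum_ind_card_nat)
      finally show ?thesis using Suc.prems(4) by simp
    next
      case (BOut a)
      have "(\<Sum>p\<in>P. count_list (W p) u) = (\<Sum>p\<in>P. (if oa p = a then 1 else 0))"
        by (rule sum.cong) (auto simp: W_def BOut count_map_up0 count_map_dn0)
      also have "\<dots> = card {p\<in>P. oa p = a}" using Suc.prems(1) by (simp add: sum_ind_card_nat)
      finally show ?thesis using Suc.prems(3) by simp
    next
      case (BUp v)
      have "(\<Sum>p\<in>P. count_list (W p) u) = (\<Sum>p\<in>P. (if or p then count_list (W1 p) v else 0))"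
        by (rule sum.cong) (auto simp: W_def BUp count_map_up count_map_dn0)
      also have "\<dots> = (\<Sum>p\<in>P1. count_list (W1 p) v)"
        using Suc.prems(1) by (simp add: sum.inter_filter P1_def)
      finally show ?thesis using W1(2) by simp
    next
      case (BDn v)
      have "(\<Sum>p\<in>P. count_list (W p) u) = (\<Sum>p\<in>P. (if \<not> or p then count_list (W2 p) v else 0))"
        by (rule sum.cong) (auto simp: W_def BDn count_map_dn count_map_up0)
      also have "\<dots> = (\<Sum>p\<in>P2. count_list (W2 p) v)"
        using Suc.prems(1) by (simp add: sum.inter_filter P2_def)
      finally show ?thesis using W2(2) by simp
    qed
  qed
qed




lemma list_hd_mid_last: "length xs \<ge> 2 \<Longrightarrow> xs = hd xs # butlast (tl xs) @ [last xs]"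
  by (cases xs) (auto simp: append_butlast_last_id)

lemma card_pos_count: "card {k. k < length xs \<and> xs ! k = u} = count_list xs u"
  by (simp add: count_list_eq_length_filter length_filter_conv_card eq_commute)

lemma set_butlast_tl: "set (butlast (tl xs)) \<subseteq> set xs"
  by (metis butlast_tl in_set_butlastD list.set_sel(2) subsetI tl_Nil)

lemma blowup_edge:
  assumes "{fst a, fst b} \<in> E" "snd a \<in> {1..t}" "snd b \<in> {1..t}"
  shows "{a, b} \<in> blowup_E E V t"
proof -
  obtain u i where a: "a = (u,i)" by (cases a)
  obtain v j where b: "b = (v,j)" by (cases b)
  show ?thesis unfolding blowup_E_def using assms a b by auto
qed

lemma lift:
  fixes M :: "'e set" and Q :: "'e \<Rightarrow> 'v list" and x y :: "'e \<Rightarrow> 'v \<times> nat" and S :: "'v set"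
  assumes fin: "finite M"
    and len: "\<forall>e\<in>M. length (Q e) \<ge> 2"
    and hdQ: "\<forall>e\<in>M. hd (Q e) = fst (x e)" and lastQ: "\<forall>e\<in>M. last (Q e) = fst (y e)"
    and succ: "\<forall>e\<in>M. successively (\<lambda>a b. {a,b} \<in> E) (Q e)"
    and QV: "\<forall>e\<in>M. set (Q e) \<subseteq> V"
    and midS: "\<forall>e\<in>M. set (butlast (tl (Q e))) \<inter> S = {}"
    and xS: "\<forall>e\<in>M. fst (x e) \<in> S \<and> fst (y e) \<in> S"
    and xr: "\<forall>e\<in>M. snd (x e) \<in> {1..t} \<and> snd (y e) \<in> {1..t}"
    and xy: "\<forall>e\<in>M. x e \<noteq> y e"
    and xinj: "\<forall>e\<in>M. \<forall>e'\<in>M. e \<noteq> e' \<longrightarrow> x e \<noteq> x e' \<and> x e \<noteq> y e' \<and> y e \<noteq> y e'"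
    and load: "\<forall>u. (\<Sum>e\<in>M. count_list (butlast (tl (Q e))) u) \<le> t"
  shows "\<exists>P. (\<forall>e\<in>M. is_path (blowup_V V t) (blowup_E E V t) (P e) (x e) (y e))
            \<and> (\<forall>e\<in>M. \<forall>e'\<in>M. e \<noteq> e' \<longrightarrow> set (P e) \<inter> set (P e') = {})"
proof -
  define mid where "mid e = butlast (tl (Q e))" for e
  have Qeq: "Q e = fst (x e) # mid e @ [fst (y e)]" if "e \<in> M" for e
    using list_hd_mid_last[of "Q e"] len hdQ lastQ that unfolding mid_def by auto
  define Vis where "Vis u = {(e,k). e \<in> M \<and> k < length (mid e) \<and> mid e ! k = u}" for u
  have VisS: "Vis u = Sigma M (\<lambda>e. {k. k < length (mid e) \<and> mid e ! k = u})" for u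
    unfolding Vis_def by auto
  have finVis: "finite (Vis u)" for u
    unfolding VisS using fin by (intro finite_SigmaI) auto
  have cardVis: "card (Vis u) \<le> t" for u
  proof -
    have "card (Vis u) = (\<Sum>e\<in>M. card {k. k < length (mid e) \<and> mid e ! k = u})"
      unfolding VisS using fin by (subst card_SigmaI) auto
    also have "\<dots> = (\<Sum>e\<in>M. count_list (mid e) u)" by (simp add: card_pos_count)
    also have "\<dots> \<le> t" using load unfolding mid_def by blast
    finally show ?thesis .
  qed
  have exf: "\<exists>f. f ` Vis u \<subseteq> {1..t} \<and> inj_on f (Vis u)" for u
    using card_le_inj[OF finVis[of u] finite_atLeastAtMost[of 1 t]] cardVis[of u] by simp
  define cf where "cf u = (SOME f. f ` Vis u \<subseteq> {1..t} \<and> inj_on f (Vis u))" for u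
  have cf: "cf u ` Vis u \<subseteq> {1..t} \<and> inj_on (cf u) (Vis u)" for u
    unfolding cf_def by (rule someI_ex[OF exf])
  define L where "L e = map (\<lambda>k. (mid e ! k, cf (mid e ! k) (e,k))) [0..<length (mid e)]" for e
  define P where "P e = x e # L e @ [y e]" for e
  have Lmem: "\<exists>k<length (mid e). z = (mid e ! k, cf (mid e ! k) (e,k))" if "z \<in> set (L e)" for z e
    using that unfolding L_def by auto
  have Lvis: "(e,k) \<in> Vis (mid e ! k)" if "e \<in> M" "k < length (mid e)" for e k
    using that unfolding Vis_def by auto
  have LnS: "fst z \<notin> S" if ee: "e \<in> M" "z \<in> set (L e)" for z e
  proof -
    obtain k where k: "k < length (mid e)" "z = (mid e ! k, cf (mid e ! k) (e,k))" using Lmem ee by blast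
    have "mid e ! k \<in> set (mid e)" using k by simp
    moreover have "set (mid e) \<inter> S = {}" using midS ee unfolding mid_def by blast
    ultimately show ?thesis using k by (metis IntI empty_iff fst_conv nth_mem)
  qed
  have Lsame: "e = e'" if ee: "e \<in> M" "e' \<in> M" "z \<in> set (L e)" "z \<in> set (L e')" for z e e'
  proof -
    obtain k where k: "k < length (mid e)" "z = (mid e ! k, cf (mid e ! k) (e,k))" using Lmem ee by blast
    obtain k' where k': "k' < length (mid e')" "z = (mid e' ! k', cf (mid e' ! k') (e',k'))" using Lmem ee by blast
    have u: "mid e' ! k' = mid e ! k" using k k' by simp
    have "(e,k) \<in> Vis (mid e ! k)" using Lvis ee k by auto
    moreover have "(e',k') \<in> Vis (mid e ! k)" using Lvis[OF ee(2) k'(1)] u by simp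
    moreover have "cf (mid e ! k) (e,k) = cf (mid e ! k) (e',k')" using k k' u by simp
    ultimately have "(e,k) = (e',k')" using cf[of "mid e ! k"] unfolding inj_on_def by metis
    then show ?thesis by simp
  qed
  have Ldist: "distinct (L e)" if "e \<in> M" for e
    unfolding L_def distinct_map
  proof
    show "distinct [0..<length (mid e)]" by simp
    show "inj_on (\<lambda>k. (mid e ! k, cf (mid e ! k) (e,k))) (set [0..<length (mid e)])"
    proof (rule inj_onI)
      fix k k' assume kk: "k \<in> set [0..<length (mid e)]" "k' \<in> set [0..<length (mid e)]"
        and eq: "(mid e ! k, cf (mid e ! k) (e,k)) = (mid e ! k', cf (mid e ! k') (e,k'))"
      have k1: "k < length (mid e)" "k' < length (mid e)" using kk by auto
      have u: "mid e ! k' = mid e ! k" using eq by simp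
      have "(e,k) \<in> Vis (mid e ! k)" using Lvis[OF that k1(1)] .
      moreover have "(e,k') \<in> Vis (mid e ! k)" using Lvis[OF that k1(2)] u by simp
      moreover have "cf (mid e ! k) (e,k) = cf (mid e ! k) (e,k')" using eq u by simp
      ultimately show "k = k'" using cf[of "mid e ! k"] unfolding inj_on_def by blast
    qed
  qed
  have Lrange: "set (L e) \<subseteq> V \<times> {1..t}" if "e \<in> M" for e
  proof
    fix z assume "z \<in> set (L e)"
    then obtain k where k: "k < length (mid e)" "z = (mid e ! k, cf (mid e ! k) (e,k))" using Lmem by blast
    have "mid e ! k \<in> set (Q e)" using k set_butlast_tl[of "Q e"] unfolding mid_def by (metis nth_mem subsetD)
    moreover have "cf (mid e ! k) (e,k) \<in> {1..t}" using cf Lvis[OF that k(1)] by blast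
    ultimately show "z \<in> V \<times> {1..t}" using QV that k by auto
  qed
  have mapfst: "map fst (L e) = mid e" for e
  proof -
    have "map fst (L e) = map (\<lambda>k. mid e ! k) [0..<length (mid e)]" unfolding L_def by (simp add: comp_def)
    also have "\<dots> = mid e" by (rule map_nth)
    finally show ?thesis .
  qed
  show ?thesis
  proof (rule exI[of _ P], intro conjI ballI impI)
    fix e assume e: "e \<in> M"
    have Qne: "Q e \<noteq> []" using len e by auto
    have "fst (x e) \<in> V" "fst (y e) \<in> V"
      using hdQ lastQ e QV hd_in_set[OF Qne] last_in_set[OF Qne] by auto
    then have xV: "x e \<in> V \<times> {1..t}" "y e \<in> V \<times> {1..t}"
      using xr e by (auto simp: mem_Times_iff)
    have Pset: "set (P e) \<subseteq> V \<times> {1..t}" unfolding P_def using xV Lrange[OF e] by auto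
    have mf: "map fst (P e) = Q e" unfolding P_def using Qeq[OF e] mapfst by simp
    have "successively (\<lambda>a b. {a,b} \<in> E) (map fst (P e))" unfolding mf using succ e by blast
    then have s1: "successively (\<lambda>a b. {fst a, fst b} \<in> E) (P e)"
      by (simp only: successively_map)
    have s2: "successively (\<lambda>a b. {a, b} \<in> blowup_E E V t) (P e)"
    proof (rule successively_mono[OF s1])
      fix a b assume ab: "a \<in> set (P e)" "b \<in> set (P e)" "{fst a, fst b} \<in> E"
      have "snd a \<in> {1..t}" "snd b \<in> {1..t}" using Pset ab by (auto simp: mem_Times_iff)
      then show "{a,b} \<in> blowup_E E V t" using ab(3) blowup_edge by blast
    qed
    have nx: "x e \<notin> set (L e)" "y e \<notin> set (L e)" using LnS[OF e] xS e by blast+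
    have dist: "distinct (P e)"
      unfolding P_def using Ldist[OF e] nx e xy by auto
    show "is_path (blowup_V V t) (blowup_E E V t) (P e) (x e) (y e)"
      unfolding is_path_def blowup_V_def
      using Pset dist successively_nth[OF s2] by (auto simp: P_def)
  next
    fix e e' assume e: "e \<in> M" and e': "e' \<in> M" and ne: "e \<noteq> e'"
    show "set (P e) \<inter> set (P e') = {}"
    proof (rule ccontr)
      assume "set (P e) \<inter> set (P e') \<noteq> {}"
      then obtain z where z: "z \<in> set (P e)" "z \<in> set (P e')" by blast
      have c1: "z = x e \<or> z = y e \<or> z \<in> set (L e)" using z(1) unfolding P_def by auto
      have c2: "z = x e' \<or> z = y e' \<or> z \<in> set (L e')" using z(2) unfolding P_def by auto
      have xs: "fst (x e) \<in> S" "fst (y e) \<in> S" "fst (x e') \<in> S" "fst (y e') \<in> S" using xS e e' by auto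
      have i1: "x e \<noteq> x e'" "x e \<noteq> y e'" "y e \<noteq> y e'" "y e \<noteq> x e'" using xinj e e' ne by metis+
      show False
      proof (cases "z \<in> set (L e)")
        case True
        then have "fst z \<notin> S" using LnS[OF e] by blast
        then have "z \<in> set (L e')" using c2 xs by auto
        then show False using Lsame[OF e e' True] ne by blast
      next
        case False
        then have "z = x e \<or> z = y e" using c1 by blast
        then have "fst z \<in> S" using xs by auto
        then have "z \<notin> set (L e')" using LnS[OF e'] by blast
        then show False using c2 i1 \<open>z = x e \<or> z = y e\<close> by auto
      qed
    qed
  qed
qed




fun outIdx :: "bvert \<Rightarrow> nat" where
  "outIdx (BOut a) = a" | "outIdx _ = 0"

lemma succ_join:
  assumes "successively R xs" "successively R ys" "xs \<noteq> []" "ys \<noteq> []" "last xs = hd ys"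
  shows "successively R (xs @ tl ys)"
  using assms by (cases ys) (auto simp: successively_append_iff successively_Cons)

lemma count_butlast_le: "count_list (butlast xs) u \<le> count_list xs u"
  by (induction xs) auto

lemma count_tl_le: "count_list (tl xs) u \<le> count_list xs u"
  by (cases xs) auto

lemma mid_join:
  assumes "xs \<noteq> []" "length ys \<ge> 2"
  shows "set (butlast (tl (xs @ tl (rev ys)))) \<subseteq> set (tl xs) \<union> set (tl ys)"
proof -
  obtain y ys' where ys: "ys = y # ys'" "ys' \<noteq> []" using assms(2) by (cases ys; cases "tl ys") auto
  have "tl (rev ys) = tl (rev ys') @ [y]" using ys by (cases "rev ys'") auto
  then have "butlast (tl (xs @ tl (rev ys))) = tl xs @ tl (rev ys')" using assms(1) by (cases xs) (auto simp: butlast_append)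
  moreover have "set (tl (rev ys')) \<subseteq> set ys'" by (metis list.set_sel(2) set_rev subsetI tl_Nil)
  ultimately show ?thesis using ys by auto
qed

lemma len2: "xs \<noteq> [] \<Longrightarrow> hd xs \<noteq> last xs \<Longrightarrow> length xs \<ge> 2"
  by (cases xs; cases "tl xs") auto

lemma sum_bool_prod: "finite M \<Longrightarrow> (\<Sum>p\<in>M \<times> (UNIV::bool set). f p) = (\<Sum>e\<in>M. f (e,True) + f (e,False))"
  by (simp add: sum.cartesian_product' UNIV_bool add.commute)

lemma benes_out: "a \<in> {1..2^Suc n} \<Longrightarrow> BOut a \<in> benes_V (Suc n)"
  by (cases n) auto

lemma card_le_inj_img: "inj_on f A \<Longrightarrow> f ` A \<subseteq> B \<Longrightarrow> finite B \<Longrightarrow> card A \<le> card B"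
  by (rule card_inj_on_le)

lemma mlinked:
  fixes n t :: nat
  defines "V \<equiv> aug_benes_V (Suc n)" and "E \<equiv> aug_benes_E (Suc n)"
  defines "Xf \<equiv> (BOut ` {1..2^Suc n}) \<times> {1..t div 2}"
  shows "matching_linked (blowup_V V t) (blowup_E E V t) Xf"
  unfolding matching_linked_def
proof (intro allI impI)
  fix M assume mo: "matching_on M Xf"
  let ?d = "t div 2"
  have finXf: "finite Xf" unfolding Xf_def by simp
  have Msub: "M \<subseteq> Pow Xf"
  proof
    fix e assume "e \<in> M"
    then obtain a b where "e = {a,b}" "a \<in> Xf" "b \<in> Xf" using mo unfolding matching_on_def by metis
    then show "e \<in> Pow Xf" by simp
  qed
  have finM: "finite M" using finite_subset[OF Msub] finXf by simp
  have exy: "\<forall>e\<in>M. \<exists>xy. e = {fst xy, snd xy} \<and> fst xy \<noteq> snd xy \<and> fst xy \<in> Xf \<and> snd xy \<in> Xf"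
  proof
    fix e assume "e \<in> M"
    then obtain a b where "e = {a,b}" "a \<noteq> b" "a \<in> Xf" "b \<in> Xf" using mo unfolding matching_on_def by metis
    then show "\<exists>xy. e = {fst xy, snd xy} \<and> fst xy \<noteq> snd xy \<and> fst xy \<in> Xf \<and> snd xy \<in> Xf"
      by (intro exI[of _ "(a,b)"]) simp
  qed
  define xy where "xy e = (SOME xy. e = {fst xy, snd xy} \<and> fst xy \<noteq> snd xy \<and> fst xy \<in> Xf \<and> snd xy \<in> Xf)" for e
  define x where "x e = fst (xy e)" for e
  define y where "y e = snd (xy e)" for e
  have xyP: "e = {x e, y e} \<and> x e \<noteq> y e \<and> x e \<in> Xf \<and> y e \<in> Xf" if "e \<in> M" for e
    unfolding x_def y_def xy_def using someI_ex[OF exy[rule_format, OF that]] .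
  have disj: "e \<inter> e' = {}" if "e \<in> M" "e' \<in> M" "e \<noteq> e'" for e e'
    using mo that unfolding matching_on_def by blast
  have xyinj: "x e \<noteq> x e' \<and> x e \<noteq> y e' \<and> y e \<noteq> y e' \<and> y e \<noteq> x e'" if "e \<in> M" "e' \<in> M" "e \<noteq> e'" for e e'
    using disj[OF that] xyP[OF that(1)] xyP[OF that(2)] by blast
  have xXf: "fst (x e) = BOut (outIdx (fst (x e))) \<and> outIdx (fst (x e)) \<in> {1..2^Suc n} \<and> snd (x e) \<in> {1..?d}"
    "fst (y e) = BOut (outIdx (fst (y e))) \<and> outIdx (fst (y e)) \<in> {1..2^Suc n} \<and> snd (y e) \<in> {1..?d}" if "e \<in> M" for e
    using xyP[OF that] unfolding Xf_def by auto
  define ep where "ep p = (if snd p then x (fst p) else y (fst p))" for p :: "(bvert \<times> nat) set \<times> bool"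
  define P where "P = M \<times> (UNIV :: bool set)"
  define oa where "oa p = outIdx (fst (ep p))" for p
  define ia where "ia p = outIdx (fst (x (fst p)))" for p :: "(bvert \<times> nat) set \<times> bool"
  have finP: "finite P" unfolding P_def using finM by simp
  have rng: "\<forall>p\<in>P. oa p \<in> {1..2^Suc n} \<and> ia p \<in> {1..2^Suc n}"
    unfolding P_def oa_def ia_def ep_def using xXf by auto
  have epinj: "inj_on ep P"
  proof (rule inj_onI)
    fix p q assume pq: "p \<in> P" "q \<in> P" "ep p = ep q"
    show "p = q"
    proof (cases "fst p = fst q")
      case True
      then show ?thesis using pq xyP[of "fst p"] unfolding P_def ep_def
        by (cases p, cases q) (auto split: if_splits)
    next
      case False
      then show ?thesis using pq xyinj[of "fst p" "fst q"] unfolding P_def ep_def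
        by (auto split: if_splits)
    qed
  qed
  have degO: "\<forall>a. card {p\<in>P. oa p = a} \<le> 2 * ?d"
  proof
    fix a
    have "card {p\<in>P. oa p = a} \<le> card ({BOut a} \<times> {1..?d})"
    proof (rule card_le_inj_img[of ep])
      show "inj_on ep {p\<in>P. oa p = a}" using epinj by (rule inj_on_subset) auto
      show "ep ` {p\<in>P. oa p = a} \<subseteq> {BOut a} \<times> {1..?d}"
      proof
        fix z assume "z \<in> ep ` {p\<in>P. oa p = a}"
        then obtain p where p: "p \<in> P" "oa p = a" "z = ep p" by blast
        have "fst (ep p) = BOut (outIdx (fst (ep p))) \<and> snd (ep p) \<in> {1..?d}"
          using xXf[of "fst p"] p(1) unfolding P_def ep_def by auto
        then show "z \<in> {BOut a} \<times> {1..?d}" using p unfolding oa_def by (simp add: mem_Times_iff)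
      qed
    qed simp
    then show "card {p\<in>P. oa p = a} \<le> 2 * ?d" by simp
  qed
  have xinj: "inj_on x M" using xyinj by (meson inj_onI)
  have degI: "\<forall>k. card {p\<in>P. ia p = k} \<le> 2 * ?d"
  proof
    fix k
    have "card {p\<in>P. ia p = k} \<le> card (({BOut k} \<times> {1..?d}) \<times> (UNIV :: bool set))"
    proof (rule card_le_inj_img[of "\<lambda>p. (x (fst p), snd p)"])
      show "inj_on (\<lambda>p. (x (fst p), snd p)) {p\<in>P. ia p = k}"
        using xinj unfolding P_def inj_on_def by auto
      show "(\<lambda>p. (x (fst p), snd p)) ` {p\<in>P. ia p = k} \<subseteq> ({BOut k} \<times> {1..?d}) \<times> UNIV"
      proof
        fix z assume "z \<in> (\<lambda>p. (x (fst p), snd p)) ` {p\<in>P. ia p = k}"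
        then obtain p where p: "p \<in> P" "ia p = k" "z = (x (fst p), snd p)" by blast
        have "fst (x (fst p)) = BOut (outIdx (fst (x (fst p)))) \<and> snd (x (fst p)) \<in> {1..?d}"
          using xXf[of "fst p"] p(1) unfolding P_def by auto
        then show "z \<in> ({BOut k} \<times> {1..?d}) \<times> UNIV" using p unfolding ia_def
          by (cases "x (fst p)") auto
      qed
    qed simp
    then show "card {p\<in>P. ia p = k} \<le> 2 * ?d" by (simp add: card_cartesian_product)
  qed
  obtain W where W: "\<forall>p\<in>P. successively (\<lambda>x y. {x,y} \<in> benes_E (Suc n)) (W p) \<and> set (W p) \<subseteq> benes_V (Suc n)
      \<and> W p \<noteq> [] \<and> hd (W p) = BOut (oa p) \<and> last (W p) = BIn (ia p) \<and> (\<forall>x\<in>set (tl (W p)). \<not> isOut x)"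
    "\<forall>u. (\<Sum>p\<in>P. count_list (W p) u) \<le> 2 * ?d"
    using route[OF finP rng degO degI] by blast
  have Wd: "successively (\<lambda>x y. {x,y} \<in> benes_E (Suc n)) (W p)" "set (W p) \<subseteq> benes_V (Suc n)" "W p \<noteq> []"
     "hd (W p) = BOut (oa p)" "last (W p) = BIn (ia p)" "\<forall>x\<in>set (tl (W p)). \<not> isOut x" if "p \<in> P" for p
    using W(1) that by blast+
  have Wl: "length (W p) \<ge> 2" if "p \<in> P" for p
    using W(1) that by (intro len2) auto
  define Q where "Q e = W (e,True) @ tl (rev (W (e,False)))" for e
  have EE: "benes_E (Suc n) \<subseteq> E" unfolding E_def aug_benes_E_def by blast
  have VV: "benes_V (Suc n) = V" unfolding V_def aug_benes_V_def by simp
  have inP: "(e,True) \<in> P" "(e,False) \<in> P" if "e \<in> M" for e using that unfolding P_def by auto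
  have LIFT: "\<exists>Pth. (\<forall>e\<in>M. is_path (blowup_V V t) (blowup_E E V t) (Pth e) (x e) (y e))
            \<and> (\<forall>e\<in>M. \<forall>e'\<in>M. e \<noteq> e' \<longrightarrow> set (Pth e) \<inter> set (Pth e') = {})"
  proof (rule lift[where Q=Q and S="range BOut"])
    show "finite M" by (rule finM)
    show "\<forall>e\<in>M. 2 \<le> length (Q e)"
      unfolding Q_def using Wl inP by fastforce
    show "\<forall>e\<in>M. hd (Q e) = fst (x e)"
    proof
      fix e assume e: "e \<in> M"
      have "hd (Q e) = hd (W (e,True))" unfolding Q_def using Wd[OF inP(1)[OF e]] Wd[OF inP(2)[OF e]] by auto
      also have "\<dots> = BOut (oa (e,True))" using Wd[OF inP(1)[OF e]] Wd[OF inP(2)[OF e]] by auto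
      also have "\<dots> = fst (x e)" unfolding oa_def ep_def using xXf[OF e] by simp
      finally show "hd (Q e) = fst (x e)" .
    qed
    show "\<forall>e\<in>M. last (Q e) = fst (y e)"
    proof
      fix e assume e: "e \<in> M"
      have l1: "length (tl (rev (W (e,False)))) \<ge> 1" using Wl[OF inP(2)[OF e]] by simp
      have ne: "tl (rev (W (e,False))) \<noteq> []"
      proof
        assume "tl (rev (W (e,False))) = []"
        then have "length (tl (rev (W (e,False)))) = 0" by (simp only: list.size(3))
        with l1 show False by linarith
      qed
      have "last (Q e) = last (tl (rev (W (e,False))))" unfolding Q_def using ne by simp
      also have "\<dots> = last (rev (W (e,False)))" using ne by (metis last_tl)
      also have "\<dots> = hd (W (e,False))" using Wd[OF inP(1)[OF e]] Wd[OF inP(2)[OF e]] by (simp add: last_rev)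
      also have "\<dots> = BOut (oa (e,False))" using Wd[OF inP(1)[OF e]] Wd[OF inP(2)[OF e]] by auto
      also have "\<dots> = fst (y e)" unfolding oa_def ep_def using xXf[OF e] by simp
      finally show "last (Q e) = fst (y e)" .
    qed
    show "\<forall>e\<in>M. successively (\<lambda>a b. {a,b} \<in> E) (Q e)"
    proof
      fix e assume e: "e \<in> M"
      have s1: "successively (\<lambda>a b. {a,b} \<in> benes_E (Suc n)) (W (e,True))" using Wd[OF inP(1)[OF e]] Wd[OF inP(2)[OF e]] by auto
      have s2: "successively (\<lambda>a b. {a,b} \<in> benes_E (Suc n)) (rev (W (e,False)))"
        using Wd[OF inP(1)[OF e]] Wd[OF inP(2)[OF e]] by (simp add: insert_commute)
      have "last (W (e,True)) = hd (rev (W (e,False)))" using Wd[OF inP(1)[OF e]] Wd[OF inP(2)[OF e]] by (simp add: hd_rev ia_def)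
      then have "successively (\<lambda>a b. {a,b} \<in> benes_E (Suc n)) (Q e)"
        unfolding Q_def using succ_join[OF s1 s2] Wd[OF inP(1)[OF e]] Wd[OF inP(2)[OF e]] by auto
      then show "successively (\<lambda>a b. {a,b} \<in> E) (Q e)"
        by (rule successively_mono) (use EE in blast)
    qed
    show "\<forall>e\<in>M. set (Q e) \<subseteq> V"
    proof
      fix e assume e: "e \<in> M"
      have "set (Q e) \<subseteq> set (W (e,True)) \<union> set (W (e,False))" unfolding Q_def
        by (metis Un_mono list.set_sel(2) set_append set_rev subsetI sup.idem tl_Nil)
      then show "set (Q e) \<subseteq> V" using Wd[OF inP(1)[OF e]] Wd[OF inP(2)[OF e]] VV by blast
    qed
    show "\<forall>e\<in>M. set (butlast (tl (Q e))) \<inter> range BOut = {}"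
    proof
      fix e assume e: "e \<in> M"
      have "set (butlast (tl (Q e))) \<subseteq> set (tl (W (e,True))) \<union> set (tl (W (e,False)))"
        unfolding Q_def using mid_join Wd[OF inP(1)[OF e]] Wd[OF inP(2)[OF e]] Wl[OF inP(2)[OF e]] by blast
      moreover have "\<forall>z\<in>set (tl (W (e,True))) \<union> set (tl (W (e,False))). \<not> isOut z"
        using Wd[OF inP(1)[OF e]] Wd[OF inP(2)[OF e]] by blast
      ultimately have "\<forall>z\<in>set (butlast (tl (Q e))). \<not> isOut z" by blast
      then show "set (butlast (tl (Q e))) \<inter> range BOut = {}" by auto
    qed
    show "\<forall>e\<in>M. fst (x e) \<in> range BOut \<and> fst (y e) \<in> range BOut"
      using xXf by (metis rangeI)
    show "\<forall>e\<in>M. snd (x e) \<in> {1..t} \<and> snd (y e) \<in> {1..t}"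
      using xXf by fastforce
    show "\<forall>e\<in>M. x e \<noteq> y e" using xyP by blast
    show "\<forall>e\<in>M. \<forall>e'\<in>M. e \<noteq> e' \<longrightarrow> x e \<noteq> x e' \<and> x e \<noteq> y e' \<and> y e \<noteq> y e'"
      using xyinj by blast
    show "\<forall>u. (\<Sum>e\<in>M. count_list (butlast (tl (Q e))) u) \<le> t"
    proof
      fix u
      have "(\<Sum>e\<in>M. count_list (butlast (tl (Q e))) u) \<le> (\<Sum>e\<in>M. count_list (W (e,True)) u + count_list (W (e,False)) u)"
      proof (rule sum_mono)
        fix e assume "e \<in> M"
        have "count_list (butlast (tl (Q e))) u \<le> count_list (tl (Q e)) u" by (rule count_butlast_le)
        also have "\<dots> \<le> count_list (Q e) u" by (rule count_tl_le)
        also have "\<dots> \<le> count_list (W (e,True)) u + count_list (W (e,False)) u"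
          unfolding Q_def using count_tl_le[of "rev (W (e,False))" u] by simp
        finally show "count_list (butlast (tl (Q e))) u \<le> count_list (W (e,True)) u + count_list (W (e,False)) u" .
      qed
      also have "\<dots> = (\<Sum>p\<in>P. count_list (W p) u)" unfolding P_def by (rule sum_bool_prod[OF finM, symmetric])
      also have "\<dots> \<le> 2 * ?d" using W(2) by blast
      also have "\<dots> \<le> t" by simp
      finally show "(\<Sum>e\<in>M. count_list (butlast (tl (Q e))) u) \<le> t" .
    qed
  qed
  then obtain Pth where Pth: "\<forall>e\<in>M. is_path (blowup_V V t) (blowup_E E V t) (Pth e) (x e) (y e)"
    "\<forall>e\<in>M. \<forall>e'\<in>M. e \<noteq> e' \<longrightarrow> set (Pth e) \<inter> set (Pth e') = {}" by blast
  show "\<exists>P. (\<forall>e\<in>M. \<exists>a b. e = {a, b} \<and> is_path (blowup_V V t) (blowup_E E V t) (P e) a b)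
          \<and> (\<forall>e\<in>M. \<forall>e'\<in>M. e \<noteq> e' \<longrightarrow> set (P e) \<inter> set (P e') = {})"
    using Pth xyP by blast
qed


lemma ml_mono:
  assumes "matching_linked V E Y" "X \<subseteq> Y"
  shows "matching_linked V E X"
  unfolding matching_linked_def
proof (intro allI impI)
  fix M assume "matching_on M X"
  then have mY: "matching_on M Y" using assms(2) unfolding matching_on_def by (meson subsetD)
  have imp: "matching_on M Y \<longrightarrow> (\<exists>P. (\<forall>e\<in>M. \<exists>a b. e = {a, b} \<and> is_path V E (P e) a b) \<and> (\<forall>e\<in>M. \<forall>e'\<in>M. e \<noteq> e' \<longrightarrow> set (P e) \<inter> set (P e') = {}))"
    using assms(1) unfolding matching_linked_def by (rule spec)
  show "\<exists>P. (\<forall>e\<in>M. \<exists>a b. e = {a, b} \<and> is_path V E (P e) a b) \<and> (\<forall>e\<in>M. \<forall>e'\<in>M. e \<noteq> e' \<longrightarrow> set (P e) \<inter> set (P e') = {})"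
    using imp mY by (rule mp)
qed

lemma floor_bound:
  fixes t l :: nat
  assumes "t \<ge> 2"
  shows "nat \<lfloor>(2 ^ l / 3) * real t\<rfloor> \<le> 2^l * (t div 2)"
proof -
  have h3: "t \<le> 3 * (t div 2)" using assms by linarith
  have "(2 ^ l / 3) * real t \<le> (2^l / 3) * real (3 * (t div 2))"
    using h3 by (intro mult_left_mono) auto
  also have "\<dots> = real (2^l * (t div 2))" by simp
  finally have "real_of_int \<lfloor>(2 ^ l / 3) * real t\<rfloor> \<le> real (2^l * (t div 2))"
    using of_int_floor_le order_trans by blast
  then have "\<lfloor>(2 ^ l / 3) * real t\<rfloor> \<le> int (2^l * (t div 2))"
    by (metis of_int_le_iff of_int_of_nat_eq)
  then show ?thesis by linarith
qed

theorem mainTheorem10: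
  fixes l :: nat
  assumes "l \<ge> 1"
  shows "linkage_capacity (aug_benes_V l) (aug_benes_E l) \<ge> ereal (2 ^ l / 3)"
proof -
  obtain n where l: "l = Suc n" using assms by (cases l) auto
  let ?V = "aug_benes_V l" and ?E = "aug_benes_E l"
  define c where "c = (2 ^ l / 3 :: real)"
  have mem: "c \<in> {c :: real. c > 0 \<and>
        (\<exists>T. \<forall>t \<ge> T. \<exists>X. X \<subseteq> blowup_V ?V t \<and> card X = nat \<lfloor>c * real t\<rfloor>
                        \<and> matching_linked (blowup_V ?V t) (blowup_E ?E ?V t) X)}"
  proof (intro CollectI conjI exI[of _ "2::nat"] allI impI)
    show "c > 0" unfolding c_def by simp
    fix t :: nat assume t: "t \<ge> 2"
    define Xf where "Xf = (BOut ` {1..2^Suc n}) \<times> {1..t div 2}"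
    have cardXf: "card Xf = 2^l * (t div 2)" unfolding Xf_def l
      by (simp add: card_cartesian_product card_image inj_on_def)
    have "nat \<lfloor>c * real t\<rfloor> \<le> card Xf" unfolding cardXf c_def using floor_bound[OF t] .
    then obtain X where X: "X \<subseteq> Xf" "card X = nat \<lfloor>c * real t\<rfloor>" by (metis obtain_subset_with_card_n)
    have XfV: "Xf \<subseteq> blowup_V ?V t"
      unfolding Xf_def blowup_V_def aug_benes_V_def l using benes_out by auto
    have "matching_linked (blowup_V ?V t) (blowup_E ?E ?V t) Xf"
      unfolding Xf_def l by (rule mlinked)
    then have "matching_linked (blowup_V ?V t) (blowup_E ?E ?V t) X" using X(1) by (rule ml_mono)
    then show "\<exists>X. X \<subseteq> blowup_V ?V t \<and> card X = nat \<lfloor>c * real t\<rfloor>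
                        \<and> matching_linked (blowup_V ?V t) (blowup_E ?E ?V t) X"
      using X XfV by blast
  qed
  then have "ereal c \<le> linkage_capacity ?V ?E"
    unfolding linkage_capacity_def by (rule SUP_upper)
  then show ?thesis unfolding c_def .
qed


end
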